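(* Fix integers $m\ge d\ge1$, $\lambda=d/m$, and $\sigma>0$. Let $p_1,p_2,\dots$ be monic polynomials of degree $d$, $p_i(x)=\prod_{j=1}^d(x-r_{i,j}^2)$ with $r_{i,j}$ real, such that $\frac1d\sum_jr_{i,j}^2=\sigma^2$ for all $i$. For $N\ge1$ let $P_N=p_1\boxplus_{d,\lambda}\cdots\boxplus_{d,\lambda}p_N$ and let $\widetilde P_N$ be the monic polynomial of degree $2d$ whose roots are the roots of $\mathbb{S}P_N$ multiplied by $1/\sqrt N$. Then, as $N\to\infty$, $\widetilde P_N$ converges coefficientwise to the monic polynomial whose roots are those of $x\mapsto L_d^{(m-d)}\!\big(\tfrac{m x^2}{\sigma^2}\big)$.
   Context: $(p\boxplus_{d,\lambda}q)(x)=\sum_{k=0}^dx^{d-k}(-1)^k\sum_{i+j=k}\frac{(d-i)!(d-j)!}{d!(d-k)!}\frac{(m-i)!(m-j)!}{m!(m-k)!}a_ib_j$ for $p=\sum(-1)^ia_ix^{d-i}$, $q=\sum(-1)^ib_ix^{d-i}$; associative, bilinear, preserves monic polynomials with nonnegative roots. $\mathbb{S}P(x)=P(x^2)$. Generalized Laguerre polynomial: $L_d^{(\alpha)}(x)=\sum_{i=0}^d\binom{d+\alpha}{d-i}\frac{(-x)^i}{i!}$. *)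

theory Defs
  imports "HOL-Analysis.Analysis" "HOL-Computational_Algebra.Polynomial"
begin

text \<open>Signed coefficients: for p of degree d, p = sum (-1)^i a_i x^(d-i), so
  a_i = (-1)^i * coeff p (d - i).\<close>
definition sgn_coeff :: "nat \<Rightarrow> real poly \<Rightarrow> nat \<Rightarrow> real" where
  "sgn_coeff d p i = (-1) ^ i * coeff p (d - i)"

text \<open>Rectangular finite free additive convolution with parameters d, m (lambda = d/m).\<close>
definition rect_conv :: "nat \<Rightarrow> nat \<Rightarrow> real poly \<Rightarrow> real poly \<Rightarrow> real poly" where
  "rect_conv d m p q =
     (\<Sum>k\<le>d. monom ((-1) ^ k *
        (\<Sum>i\<le>k. (fact (d - i) * fact (d - (k - i)) / (fact d * fact (d - k))) *
                  (fact (m - i) * fact (m - (k - i)) / (fact m * fact (m - k))) *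
                  sgn_coeff d p i * sgn_coeff d q (k - i))) (d - k))"

text \<open>Iterated convolution: rect_iter d m p n = p 1 \<boxplus> ... \<boxplus> p (n+1).\<close>
primrec rect_iter :: "nat \<Rightarrow> nat \<Rightarrow> (nat \<Rightarrow> real poly) \<Rightarrow> nat \<Rightarrow> real poly" where
  "rect_iter d m p 0 = p 1"
| "rect_iter d m p (Suc n) = rect_conv d m (rect_iter d m p n) (p (Suc (Suc n)))"

definition P_N :: "nat \<Rightarrow> nat \<Rightarrow> (nat \<Rightarrow> real poly) \<Rightarrow> nat \<Rightarrow> real poly" where
  "P_N d m p N = rect_iter d m p (N - 1)"

definition Sop :: "real poly \<Rightarrow> real poly" where
  "Sop P = pcompose P [:0, 0, 1:]"

text \<open>Monic polynomial of degree 2d whose roots are those of the monic degree-2d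
  polynomial Q, multiplied by 1/sqrt N: x \<mapsto> N^(-d) Q(sqrt N x).\<close>
definition scale_roots :: "nat \<Rightarrow> real \<Rightarrow> real poly \<Rightarrow> real poly" where
  "scale_roots d c Q = smult (1 / c ^ (2 * d)) (pcompose Q [:0, c:])"

definition P_tilde :: "nat \<Rightarrow> nat \<Rightarrow> (nat \<Rightarrow> real poly) \<Rightarrow> nat \<Rightarrow> real poly" where
  "P_tilde d m p N = scale_roots d (sqrt (real N)) (Sop (P_N d m p N))"

definition laguerre :: "nat \<Rightarrow> nat \<Rightarrow> real poly" where
  "laguerre d \<alpha> = (\<Sum>i\<le>d. monom (real ((d + \<alpha>) choose (d - i)) * (-1) ^ i / fact i) i)"

definition laguerre_limit :: "nat \<Rightarrow> nat \<Rightarrow> real \<Rightarrow> real poly" where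
  "laguerre_limit d m \<sigma> =
     (let L = pcompose (laguerre d (m - d)) [:0, 0, real m / \<sigma>^2:]
      in smult (1 / lead_coeff L) L)"

end

theory Submission
  imports Defs
begin


definition bnd :: "nat \<Rightarrow> (nat \<Rightarrow> real) \<Rightarrow> bool" where
  "bnd j f \<longleftrightarrow> (\<exists>K. \<forall>n. \<bar>f n\<bar> \<le> K * real (Suc n) ^ j)"

lemma bndI: "(\<And>n. \<bar>f n\<bar> \<le> K * real (Suc n) ^ j) \<Longrightarrow> bnd j f"
  unfolding bnd_def by blast

lemma bndE:
  assumes "bnd j f"
  shows "\<exists>K. K \<ge> 0 \<and> (\<forall>n. \<bar>f n\<bar> \<le> K * real (Suc n) ^ j)"
proof -
  from assms obtain K where K: "\<And>n. \<bar>f n\<bar> \<le> K * real (Suc n) ^ j" unfolding bnd_def by blast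
  have "\<bar>f 0\<bar> \<le> K" using K[of 0] by simp
  then have "K \<ge> 0" by linarith
  then show ?thesis using K by blast
qed

lemma bnd_mono:
  assumes "bnd i f" "i \<le> j" shows "bnd j f"
proof -
  obtain K where K: "K \<ge> 0" "\<And>n. \<bar>f n\<bar> \<le> K * real (Suc n) ^ i" using bndE[OF assms(1)] by blast
  show ?thesis
  proof (rule bndI[of _ K])
    fix n
    have "real (Suc n) ^ i \<le> real (Suc n) ^ j" by (rule power_increasing) (use assms in auto)
    then have "K * real (Suc n) ^ i \<le> K * real (Suc n) ^ j" using K(1) by (rule mult_left_mono)
    then show "\<bar>f n\<bar> \<le> K * real (Suc n) ^ j" using K(2)[of n] by linarith
  qed
qed

lemma bnd_add:
  assumes "bnd j f" "bnd j g" shows "bnd j (\<lambda>n. f n + g n)"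
proof -
  obtain K where K: "K \<ge> 0" "\<And>n. \<bar>f n\<bar> \<le> K * real (Suc n) ^ j" using bndE[OF assms(1)] by blast
  obtain L where L: "L \<ge> 0" "\<And>n. \<bar>g n\<bar> \<le> L * real (Suc n) ^ j" using bndE[OF assms(2)] by blast
  show ?thesis
  proof (rule bndI[of _ "K + L"])
    fix n
    have "\<bar>f n + g n\<bar> \<le> \<bar>f n\<bar> + \<bar>g n\<bar>" by (rule abs_triangle_ineq)
    also have "\<dots> \<le> K * real (Suc n) ^ j + L * real (Suc n) ^ j" using K(2) L(2) by (rule add_mono)
    finally show "\<bar>f n + g n\<bar> \<le> (K + L) * real (Suc n) ^ j" by (simp add: distrib_right)
  qed
qed

lemma bnd_zero: "bnd j (\<lambda>n. 0)"
  by (rule bndI[of _ 0]) simp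

lemma bnd_sum:
  assumes "\<And>i. i \<in> A \<Longrightarrow> bnd j (f i)"
  shows "bnd j (\<lambda>n. \<Sum>i\<in>A. f i n)"
  using assms
proof (induction A rule: infinite_finite_induct)
  case (infinite A) then show ?case by (simp add: bnd_zero)
next
  case empty then show ?case by (simp add: bnd_zero)
next
  case (insert x F)
  then show ?case by (simp add: bnd_add)
qed

lemma bnd_mult_bounded:
  assumes "bnd j f" "\<And>n. \<bar>g n\<bar> \<le> M" shows "bnd j (\<lambda>n. f n * g n)"
proof -
  obtain K where K: "K \<ge> 0" "\<And>n. \<bar>f n\<bar> \<le> K * real (Suc n) ^ j" using bndE[OF assms(1)] by blast
  have M: "M \<ge> 0" using assms(2)[of 0] by linarith
  show ?thesis
  proof (rule bndI[of _ "K * M"])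
    fix n
    have "\<bar>f n * g n\<bar> = \<bar>f n\<bar> * \<bar>g n\<bar>" by (simp add: abs_mult)
    also have "\<dots> \<le> (K * real (Suc n) ^ j) * M"
      by (rule mult_mono) (use K assms(2) M in auto)
    finally show "\<bar>f n * g n\<bar> \<le> K * M * real (Suc n) ^ j" by (simp add: algebra_simps)
  qed
qed

lemma bnd_cmult:
  assumes "bnd j f" shows "bnd j (\<lambda>n. c * f n)"
  using bnd_mult_bounded[OF assms, of "\<lambda>_. c" "\<bar>c\<bar>"] by (simp add: mult.commute)

lemma bnd_integrate:
  assumes "bnd j (\<lambda>n. e (Suc n) - e n)" shows "bnd (Suc j) e"
proof -
  obtain K where K: "K \<ge> 0" "\<And>n. \<bar>e (Suc n) - e n\<bar> \<le> K * real (Suc n) ^ j" using bndE[OF assms] by blast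
  have main: "\<bar>e n\<bar> \<le> \<bar>e 0\<bar> + K * real (Suc n) ^ Suc j" for n
  proof (induction n)
    case 0 then show ?case using K by simp
  next
    case (Suc n)
    have a: "real (Suc n) ^ Suc j + real (Suc n) ^ j \<le> real (Suc (Suc n)) ^ Suc j"
    proof -
      have "real (Suc n) ^ j \<le> real (Suc (Suc n)) ^ j" by (rule power_mono) auto
      then have "real (Suc n) ^ Suc j + real (Suc n) ^ j = (real (Suc n) + 1) * real (Suc n) ^ j"
        by (simp add: algebra_simps)
      also have "\<dots> \<le> real (Suc (Suc n)) * real (Suc (Suc n)) ^ j"
        by (rule mult_mono) (use \<open>real (Suc n) ^ j \<le> _\<close> in auto)
      finally show ?thesis by simp
    qed
    have "\<bar>e (Suc n)\<bar> \<le> \<bar>e n\<bar> + K * real (Suc n) ^ j" using K(2)[of n] by linarith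
    also have "\<dots> \<le> \<bar>e 0\<bar> + K * (real (Suc n) ^ Suc j + real (Suc n) ^ j)"
      using Suc by (simp add: algebra_simps)
    also have "\<dots> \<le> \<bar>e 0\<bar> + K * real (Suc (Suc n)) ^ Suc j"
      using mult_left_mono[OF a K(1)] by linarith
    finally show ?case .
  qed
  show ?thesis
  proof (rule bndI[of _ "\<bar>e 0\<bar> + K"])
    fix n
    have "1 \<le> real (Suc n) ^ Suc j" by (rule one_le_power) simp
    then have "\<bar>e 0\<bar> \<le> \<bar>e 0\<bar> * real (Suc n) ^ Suc j"
      using mult_left_mono[of 1 _ "\<bar>e 0\<bar>"] by simp
    then show "\<bar>e n\<bar> \<le> (\<bar>e 0\<bar> + K) * real (Suc n) ^ Suc j"
      using main[of n] by (simp add: algebra_simps)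
  qed
qed



lemma choose_le_pow: "real (N choose i) \<le> real N ^ i"
proof (cases "i \<le> N")
  case True
  then have "N choose i \<le> N ^ i" by (rule binomial_le_pow)
  then show ?thesis by (metis of_nat_le_iff of_nat_power)
next
  case False then show ?thesis by (simp add: binomial_eq_0)
qed

lemma bnd_choose: "bnd i (\<lambda>n. real (Suc n choose i) * c)"
proof (rule bndI[of _ "\<bar>c\<bar>"])
  fix n
  have "\<bar>real (Suc n choose i) * c\<bar> = real (Suc n choose i) * \<bar>c\<bar>" by (simp add: abs_mult)
  also have "\<dots> \<le> real (Suc n) ^ i * \<bar>c\<bar>" by (rule mult_right_mono[OF choose_le_pow]) simp
  finally show "\<bar>real (Suc n choose i) * c\<bar> \<le> \<bar>c\<bar> * real (Suc n) ^ i" by (simp add: mult.commute)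
qed

lemma asym_bnd:
  fixes \<alpha> \<beta> :: "nat \<Rightarrow> nat \<Rightarrow> real"
  assumes b0: "\<And>n. \<beta> n 0 = 1" and b1: "\<And>n. \<beta> n 1 = s" and bM: "\<And>n k. \<bar>\<beta> n k\<bar> \<le> M"
    and a0: "\<And>k. k \<le> d \<Longrightarrow> \<alpha> 0 k = \<beta> 0 k"
    and aS: "\<And>n k. k \<le> d \<Longrightarrow> \<alpha> (Suc n) k = (\<Sum>i\<le>k. \<alpha> n i * \<beta> (Suc n) (k - i))"
  shows "k \<le> d \<Longrightarrow> bnd (k - 1) (\<lambda>n. \<alpha> n k - real (Suc n choose k) * s ^ k)"
proof (induction k rule: less_induct)
  case (less k)
  have b1': "\<beta> n (Suc 0) = s" for n using b1[of n] by simp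
  have al0: "\<alpha> n 0 = 1" for n
    by (induction n) (simp_all add: a0 b0 aS)
  show ?case
  proof (cases k)
    case 0
    then show ?thesis by (simp add: al0 bnd_zero)
  next
    case (Suc k1)
    show ?thesis
    proof (cases k1)
      case 0
      have k1: "k = 1" "1 \<le> d" using \<open>k = Suc k1\<close> 0 less.prems by auto
      have "\<alpha> n 1 = real (Suc n) * s" for n
      proof (induction n)
        case 0 then show ?case using k1 b1[of 0] by (simp add: a0)
      next
        case (Suc n)
        have "\<alpha> (Suc n) 1 = \<alpha> n 0 * \<beta> (Suc n) 1 + \<alpha> n 1 * \<beta> (Suc n) 0"
          using aS[of 1 n] k1 by simp
        then show ?case using Suc.IH by (simp add: al0 b0 b1' algebra_simps)
      qed
      then show ?thesis using k1 by (simp add: bnd_zero)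
    next
      case (Suc k')
      have kk: "k = Suc (Suc k')" using \<open>k = Suc k1\<close> Suc by simp
      define e where "e = (\<lambda>n. \<alpha> n k - real (Suc n choose k) * s ^ k)"
      define e1 where "e1 = (\<lambda>n. \<alpha> n (Suc k') - real (Suc n choose (Suc k')) * s ^ (Suc k'))"
      have IH1: "bnd k' e1" using less.IH[of "Suc k'"] less.prems kk unfolding e1_def by simp
      have IHa: "bnd k' (\<lambda>n. \<alpha> n i)" if "i \<le> k'" for i
      proof -
        have "bnd (i - 1) (\<lambda>n. \<alpha> n i - real (Suc n choose i) * s ^ i)"
          using less.IH[of i] less.prems kk that by simp
        then have "bnd i (\<lambda>n. \<alpha> n i - real (Suc n choose i) * s ^ i)" by (rule bnd_mono) simp
        then have "bnd i (\<lambda>n. (\<alpha> n i - real (Suc n choose i) * s ^ i) + real (Suc n choose i) * s ^ i)"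
          by (rule bnd_add[OF _ bnd_choose])
        then have "bnd i (\<lambda>n. \<alpha> n i)" by simp
        then show ?thesis by (rule bnd_mono) (use that in simp)
      qed
      have diff: "e (Suc n) - e n = s * e1 n + (\<Sum>i\<le>k'. \<alpha> n i * \<beta> (Suc n) (k - i))" for n
      proof -
        have "\<alpha> (Suc n) k = (\<Sum>i\<le>k'. \<alpha> n i * \<beta> (Suc n) (k - i)) + \<alpha> n (Suc k') * s + \<alpha> n k"
          using aS[of k n] less.prems kk by (simp add: b0 b1')
        moreover have "real (Suc (Suc n) choose k) = real (Suc n choose Suc k') + real (Suc n choose k)"
          using kk by simp
        ultimately show ?thesis unfolding e_def e1_def using kk by (simp add: algebra_simps)
      qed
      have "bnd k' (\<lambda>n. s * e1 n + (\<Sum>i\<le>k'. \<alpha> n i * \<beta> (Suc n) (k - i)))"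
      proof (rule bnd_add)
        show "bnd k' (\<lambda>n. s * e1 n)" by (rule bnd_cmult[OF IH1])
        show "bnd k' (\<lambda>n. \<Sum>i\<le>k'. \<alpha> n i * \<beta> (Suc n) (k - i))"
        proof (rule bnd_sum)
          fix i assume "i \<in> {..k'}"
          then show "bnd k' (\<lambda>n. \<alpha> n i * \<beta> (Suc n) (k - i))"
            by (intro bnd_mult_bounded[OF IHa bM]) auto
        qed
      qed
      then have "bnd k' (\<lambda>n. e (Suc n) - e n)" by (simp add: diff)
      then have "bnd (Suc k') e" by (rule bnd_integrate)
      then show ?thesis unfolding e_def using kk by simp
    qed
  qed
qed


lemma binlim: "(\<lambda>n. real (Suc n choose k) / real (Suc n) ^ k) \<longlonglongrightarrow> 1 / fact k"
proof -
  have eq: "real (Suc n choose k) / real (Suc n) ^ k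
      = (\<Prod>i\<in>{0..<k}. 1 - real i / real (Suc n)) / fact k" for n
  proof -
    have "real (Suc n choose k) = (\<Prod>i\<in>{0..<k}. real (Suc n) - real i) / fact k"
      by (simp add: binomial_gbinomial gbinomial_prod_rev)
    moreover have "real (Suc n) ^ k = (\<Prod>i\<in>{0..<k}. real (Suc n))" by simp
    moreover have "(\<Prod>i\<in>{0..<k}. real (Suc n) - real i) / (\<Prod>i\<in>{0..<k}. real (Suc n))
        = (\<Prod>i\<in>{0..<k}. 1 - real i / real (Suc n))"
    proof -
      have "(\<Prod>i\<in>{0..<k}. 1 - real i / real (Suc n)) = (\<Prod>i\<in>{0..<k}. (real (Suc n) - real i) / real (Suc n))"
        by (rule prod.cong) (simp_all add: field_simps del: of_nat_Suc)
      also have "\<dots> = (\<Prod>i\<in>{0..<k}. real (Suc n) - real i) / (\<Prod>i\<in>{0..<k}. real (Suc n))"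
        by (rule prod_dividef)
      finally show ?thesis by simp
    qed
    ultimately show ?thesis by (metis divide_divide_eq_left mult.commute)
  qed
  have "(\<lambda>n. (\<Prod>i\<in>{0..<k}. 1 - real i / real (Suc n)) / fact k) \<longlonglongrightarrow> (\<Prod>i\<in>{0..<k}. 1 - 0) / fact k"
    by (intro tendsto_divide tendsto_prod tendsto_diff tendsto_const LIMSEQ_Suc[OF lim_const_over_n]) auto
  then show ?thesis unfolding eq by simp
qed

lemma bnd_div_lim:
  assumes "bnd (k - 1) e" "k \<ge> 1"
  shows "(\<lambda>n. e n / real (Suc n) ^ k) \<longlonglongrightarrow> 0"
proof -
  obtain K where K: "K \<ge> 0" "\<And>n. \<bar>e n\<bar> \<le> K * real (Suc n) ^ (k - 1)"
    using bndE[OF assms(1)] by blast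
  have "norm (e n / real (Suc n) ^ k) \<le> K / real (Suc n)" for n
  proof -
    have kk: "real (Suc n) ^ k = real (Suc n) ^ (k - 1) * real (Suc n)"
      using assms(2) by (metis Suc_diff_1 less_le_trans zero_less_one power_Suc2)
    have "norm (e n / real (Suc n) ^ k) = \<bar>e n\<bar> / real (Suc n) ^ k" by simp
    also have "\<dots> \<le> K * real (Suc n) ^ (k - 1) / real (Suc n) ^ k"
      by (rule divide_right_mono[OF K(2)]) simp
    also have "\<dots> = K / real (Suc n)" unfolding kk by (simp del: of_nat_Suc)
    finally show ?thesis .
  qed
  then show ?thesis
    by (intro Lim_null_comparison[OF always_eventually LIMSEQ_Suc[OF lim_const_over_n]]) auto
qed

lemma asym_lim:
  fixes \<alpha> \<beta> :: "nat \<Rightarrow> nat \<Rightarrow> real"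
  assumes b0: "\<And>n. \<beta> n 0 = 1" and b1: "\<And>n. \<beta> n 1 = s" and bM: "\<And>n k. \<bar>\<beta> n k\<bar> \<le> M"
    and a0: "\<And>k. k \<le> d \<Longrightarrow> \<alpha> 0 k = \<beta> 0 k"
    and aS: "\<And>n k. k \<le> d \<Longrightarrow> \<alpha> (Suc n) k = (\<Sum>i\<le>k. \<alpha> n i * \<beta> (Suc n) (k - i))"
    and kd: "k \<le> d"
  shows "(\<lambda>n. \<alpha> n k / real (Suc n) ^ k) \<longlonglongrightarrow> s ^ k / fact k"
proof (cases "k = 0")
  case True
  have al0: "\<alpha> n 0 = 1" for n
    by (induction n) (simp_all add: a0 b0 aS)
  then show ?thesis using True by simp
next
  case False
  define e where "e = (\<lambda>n. \<alpha> n k - real (Suc n choose k) * s ^ k)"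
  have "bnd (k - 1) e" unfolding e_def by (rule asym_bnd[OF assms])
  then have E: "(\<lambda>n. e n / real (Suc n) ^ k) \<longlonglongrightarrow> 0" by (rule bnd_div_lim) (use False in simp)
  have eq: "\<alpha> n k / real (Suc n) ^ k = s ^ k * (real (Suc n choose k) / real (Suc n) ^ k) + e n / real (Suc n) ^ k" for n
    unfolding e_def by (simp add: field_simps del: of_nat_Suc)
  have "(\<lambda>n. s ^ k * (real (Suc n choose k) / real (Suc n) ^ k) + e n / real (Suc n) ^ k) \<longlonglongrightarrow> s ^ k * (1 / fact k) + 0"
    by (intro tendsto_add tendsto_mult_left binlim E)
  then show ?thesis unfolding eq by simp
qed



lemma coeff_mult_lin0:
  fixes P :: "real poly"
  shows "coeff (P * [:a, 1:]) 0 = a * coeff P 0"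
  by simp

lemma coeff_mult_linS:
  fixes P :: "real poly"
  shows "coeff (P * [:a, 1:]) (Suc i) = a * coeff P (Suc i) + coeff P i"
  by simp

lemma lin_prod:
  fixes c :: "nat \<Rightarrow> real"
  shows "coeff (\<Prod>j<n. [:- c j, 1:]) n = 1 \<and> (\<forall>i>n. coeff (\<Prod>j<n. [:- c j, 1:]) i = 0)
     \<and> (n \<ge> 1 \<longrightarrow> coeff (\<Prod>j<n. [:- c j, 1:]) (n - 1) = - (\<Sum>j<n. c j))"
proof (induction n)
  case 0
  then show ?case by (auto simp: coeff_1)
next
  case (Suc n)
  define P where "P = (\<Prod>j<n. [:- c j, 1:])"
  have PS: "(\<Prod>j<Suc n. [:- c j, 1:]) = P * [:- c n, 1:]" unfolding P_def by simp
  have IH: "coeff P n = 1" "\<And>i. i > n \<Longrightarrow> coeff P i = 0"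
    "n \<ge> 1 \<Longrightarrow> coeff P (n - 1) = - (\<Sum>j<n. c j)" using Suc.IH unfolding P_def by auto
  have 1: "coeff (P * [:- c n, 1:]) (Suc n) = 1"
    unfolding coeff_mult_linS using IH by simp
  have 2: "coeff (P * [:- c n, 1:]) i = 0" if h: "i > Suc n" for i
  proof -
    obtain i' where "i = Suc i'" "i' > n" using h by (cases i) auto
    then show ?thesis unfolding coeff_mult_linS using IH by simp
  qed
  have 3: "coeff (P * [:- c n, 1:]) n = - (\<Sum>j<Suc n. c j)"
  proof (cases n)
    case 0
    then show ?thesis unfolding coeff_mult_lin0 using IH by simp
  next
    case (Suc n')
    then show ?thesis unfolding coeff_mult_linS using IH by simp
  qed
  show ?case unfolding PS using 1 2 3 by simp
qed

lemma lin_prod_bound: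
  fixes c :: "nat \<Rightarrow> real"
  assumes "\<And>j. j < n \<Longrightarrow> \<bar>c j\<bar> \<le> B" "B \<ge> 0"
  shows "\<bar>coeff (\<Prod>j<n. [:- c j, 1:]) i\<bar> \<le> (1 + B) ^ n"
  using assms(1)
proof (induction n arbitrary: i)
  case 0
  then show ?case by (simp add: coeff_1)
next
  case (Suc n)
  define P where "P = (\<Prod>j<n. [:- c j, 1:])"
  have PS: "(\<Prod>j<Suc n. [:- c j, 1:]) = P * [:- c n, 1:]" unfolding P_def by simp
  have IH: "\<bar>coeff P i\<bar> \<le> (1 + B) ^ n" for i using Suc unfolding P_def by auto
  have cn: "\<bar>c n\<bar> \<le> B" using Suc.prems by simp
  have pos: "(0::real) \<le> (1 + B) ^ n" using assms(2) by simp
  have key: "\<bar>c n\<bar> * \<bar>coeff P i\<bar> \<le> B * (1 + B) ^ n" for i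
    by (rule mult_mono[OF cn IH]) (use assms(2) in auto)
  show ?case
  proof (cases i)
    case 0
    have "\<bar>coeff (P * [:- c n, 1:]) 0\<bar> = \<bar>c n\<bar> * \<bar>coeff P 0\<bar>" by (simp add: abs_mult)
    also have "\<dots> \<le> B * (1 + B) ^ n" by (rule key)
    also have "\<dots> \<le> (1 + B) ^ Suc n" using pos by (simp add: algebra_simps)
    finally show ?thesis unfolding PS 0 .
  next
    case (Suc i')
    have "\<bar>coeff (P * [:- c n, 1:]) (Suc i')\<bar> \<le> \<bar>c n\<bar> * \<bar>coeff P (Suc i')\<bar> + \<bar>coeff P i'\<bar>"
      unfolding coeff_mult_linS by (simp add: abs_mult[symmetric] abs_triangle_ineq[THEN order_trans])
    also have "\<dots> \<le> B * (1 + B) ^ n + (1 + B) ^ n" using key IH by (rule add_mono)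
    also have "\<dots> = (1 + B) ^ Suc n" by (simp add: algebra_simps)
    finally show ?thesis unfolding PS Suc .
  qed
qed

lemma coeff_pcompose_sq:
  "coeff (pcompose P [:0, 0, 1 :: real:]) t = (if even t then coeff P (t div 2) else 0)"
proof (induction P arbitrary: t)
  case 0 then show ?case by simp
next
  case (pCons a P)
  have eq: "[:0, 0, 1 :: real:] * Q = pCons 0 (pCons 0 Q)" for Q by simp
  show ?case
  proof (cases t)
    case 0 then show ?thesis by (simp add: pcompose_pCons eq)
  next
    case (Suc t1)
    show ?thesis
    proof (cases t1)
      case 0 then show ?thesis using Suc by (simp add: pcompose_pCons eq)
    next
      case (Suc t2)
      then show ?thesis using \<open>t = Suc t1\<close> pCons.IH[of t2] by (simp add: pcompose_pCons eq)
    qed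
  qed
qed



definition W :: "nat \<Rightarrow> nat \<Rightarrow> nat \<Rightarrow> nat \<Rightarrow> real" where
  "W d m i k = (fact (d - i) * fact (d - (k - i)) / (fact d * fact (d - k))) *
                  (fact (m - i) * fact (m - (k - i)) / (fact m * fact (m - k)))"

definition wt :: "nat \<Rightarrow> nat \<Rightarrow> nat \<Rightarrow> real" where
  "wt d m k = fact (d - k) * fact (m - k) / (fact d * fact m)"

lemma coeff_rect_conv_high:
  assumes "j > d" shows "coeff (rect_conv d m p q) j = 0"
  unfolding rect_conv_def coeff_sum using assms by (auto simp: coeff_monom intro!: sum.neutral)

lemma sgn_coeff_rect_conv:
  assumes "k \<le> d"
  shows "sgn_coeff d (rect_conv d m p q) k = (\<Sum>i\<le>k. W d m i k * sgn_coeff d p i * sgn_coeff d q (k - i))"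
proof -
  define c where "c = (\<lambda>k. (-1) ^ k *
        (\<Sum>i\<le>k. (fact (d - i) * fact (d - (k - i)) / (fact d * fact (d - k))) *
                  (fact (m - i) * fact (m - (k - i)) / (fact m * fact (m - k))) *
                  sgn_coeff d p i * sgn_coeff d q (k - i)) :: real)"
  have "coeff (rect_conv d m p q) (d - k) = (\<Sum>k'\<le>d. coeff (monom (c k') (d - k')) (d - k))"
    unfolding rect_conv_def c_def coeff_sum ..
  also have "\<dots> = (\<Sum>k'\<le>d. if k' = k then c k' else 0)"
    by (rule sum.cong) (use assms in \<open>auto simp: coeff_monom\<close>)
  also have "\<dots> = c k" using assms by simp
  finally have "coeff (rect_conv d m p q) (d - k) = c k" .
  then have "sgn_coeff d (rect_conv d m p q) k = (-1) ^ k * c k" unfolding sgn_coeff_def by simp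
  also have "\<dots> = ((-1) ^ k * (-1) ^ k) * (\<Sum>i\<le>k. W d m i k * sgn_coeff d p i * sgn_coeff d q (k - i))"
    unfolding c_def W_def by (simp add: mult.assoc)
  also have "(-1::real) ^ k * (-1) ^ k = 1" by (simp add: power_mult_distrib[symmetric])
  finally show ?thesis by simp
qed

lemma wt_W:
  assumes "i \<le> k" "k \<le> d" "d \<le> m"
  shows "wt d m k * W d m i k = wt d m i * wt d m (k - i)"
  unfolding wt_def W_def using assms by (simp add: field_simps)

lemma wt_pos: "wt d m k > 0"
  unfolding wt_def by simp

lemma wt_le1: "wt d m k \<le> 1"
proof -
  have "fact (d - k) * fact (m - k) \<le> (fact d * fact m :: real)"
    by (intro mult_mono fact_mono) auto
  then show ?thesis unfolding wt_def by simp
qed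

lemma wt0: "wt d m 0 = 1" unfolding wt_def by simp

lemma wt1: assumes "1 \<le> d" "d \<le> m" shows "wt d m 1 = 1 / (real d * real m)"
proof -
  have "fact d = real d * fact (d - 1)" using assms by (simp add: fact_reduce)
  moreover have "fact m = real m * fact (m - 1)" using assms by (simp add: fact_reduce)
  ultimately show ?thesis unfolding wt_def by simp
qed

lemma coeff_rect_iter_high:
  assumes "j > d" "coeff (p 1) j = 0" shows "coeff (rect_iter d m p n) j = 0"
  using assms by (cases n) (simp_all add: coeff_rect_conv_high)

lemma coeff_laguerre:
  "coeff (laguerre d a) j = (if j \<le> d then real ((d + a) choose (d - j)) * (-1) ^ j / fact j else 0)"
  unfolding laguerre_def coeff_sum by (auto simp: coeff_monom)

lemma coeff_pcompose_sqr:
  fixes r :: real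
  shows "coeff (pcompose P [:0, 0, r:]) t = (if even t then r ^ (t div 2) * coeff P (t div 2) else 0)"
proof -
  have "[:0, 0, r:] = pcompose [:0, r:] [:0, 0, 1:]" by (simp add: pcompose_pCons)
  then have "pcompose P [:0, 0, r:] = pcompose (pcompose P [:0, r:]) [:0, 0, 1:]"
    by (simp add: pcompose_assoc)
  then show ?thesis by (simp add: coeff_pcompose_sq coeff_pcompose_linear)
qed

lemma coeff_P_tilde:
  assumes "N \<ge> 1"
  shows "coeff (P_tilde d m p N) t =
    (if even t then coeff (P_N d m p N) (t div 2) * real N ^ (t div 2) / real N ^ d else 0)"
proof -
  have s2: "sqrt (real N) ^ (2 * j) = real N ^ j" for j
    by (simp add: power_mult)
  show ?thesis
    unfolding P_tilde_def scale_roots_def Sop_def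
    by (auto simp: coeff_pcompose_linear coeff_pcompose_sq s2 elim!: evenE)
qed



lemma coeff_laguerre_limit:
  assumes "1 \<le> d" "d \<le> m" "\<sigma> > 0"
  defines "r \<equiv> real m / \<sigma>^2"
  defines "l \<equiv> (\<lambda>j. real (m choose (d - j)) * (-1) ^ j / fact j :: real)"
  shows "coeff (laguerre_limit d m \<sigma>) t =
     (if even t \<and> t div 2 \<le> d then l (t div 2) * r ^ (t div 2) / (l d * r ^ d) else 0)"
proof -
  define L where "L = pcompose (laguerre d (m - d)) [:0, 0, real m / \<sigma>^2:]"
  have dm: "d + (m - d) = m" using assms by simp
  have cL: "coeff L t = (if even t \<and> t div 2 \<le> d then l (t div 2) * r ^ (t div 2) else 0)" for t
    unfolding L_def coeff_pcompose_sqr coeff_laguerre dm l_def r_def by auto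
  have rnz: "r \<noteq> 0" unfolding r_def using assms by simp
  have lnz: "l d \<noteq> 0" unfolding l_def by simp
  have c2d: "coeff L (2 * d) = l d * r ^ d" using cL[of "2 * d"] by simp
  have "degree L = 2 * d"
  proof (rule antisym)
    show "degree L \<le> 2 * d" by (rule degree_le) (auto simp: cL)
    show "2 * d \<le> degree L" by (rule le_degree) (simp add: c2d rnz lnz)
  qed
  then have lc: "lead_coeff L = l d * r ^ d" using c2d by simp
  have "laguerre_limit d m \<sigma> = smult (1 / (l d * r ^ d)) L"
    unfolding laguerre_limit_def Let_def L_def[symmetric] lc ..
  then show ?thesis by (simp add: cL)
qed


lemma const_eq:
  assumes "d = j + i" "d \<le> m" "\<sigma> > 0" "1 \<le> d"
  shows "((-1) ^ i / wt d m i) * ((\<sigma>^2 / real m) ^ i / fact i) =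
    (real (m choose (d - j)) * (-1) ^ j / fact j) * (real m / \<sigma>^2) ^ j /
      ((real (m choose (d - d)) * (-1) ^ d / fact d) * (real m / \<sigma>^2) ^ d)"
proof -
  have im: "i \<le> m" using assms by simp
  have ch: "real (m choose i) = fact m / (fact i * fact (m - i))" by (rule binomial_fact[OF im])
  have m0: "real m > 0" using assms by simp
  have sg: "(-1::real) ^ j / (-1) ^ (j + i) = (-1) ^ i"
    by (simp add: power_add field_simps power_mult_distrib[symmetric])
  have rr: "(real m / \<sigma>^2) ^ j / (real m / \<sigma>^2) ^ (j + i) = (\<sigma>^2 / real m) ^ i"
    using m0 assms(3) by (simp add: power_add field_simps)
  have "(real (m choose (d - j)) * (-1) ^ j / fact j) * (real m / \<sigma>^2) ^ j /
      ((real (m choose (d - d)) * (-1) ^ d / fact d) * (real m / \<sigma>^2) ^ d)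
     = real (m choose i) * fact d / fact j * ((-1) ^ j / (-1) ^ (j + i)) * ((real m / \<sigma>^2) ^ j / (real m / \<sigma>^2) ^ (j + i))"
    using assms(1) by (simp add: mult_ac)
  also have "\<dots> = real (m choose i) * fact d / fact j * (-1) ^ i * (\<sigma>^2 / real m) ^ i"
    unfolding sg rr ..
  finally show ?thesis unfolding ch wt_def using assms(1) by (simp add: field_simps)
qed



theorem mainTheorem8:
  fixes d m :: nat and \<sigma> :: real and p :: "nat \<Rightarrow> real poly"
  assumes "1 \<le> d" and "d \<le> m" and "\<sigma> > 0"
    and "\<And>i. i \<ge> 1 \<Longrightarrow> \<exists>r :: nat \<Rightarrow> real.
           p i = (\<Prod>j<d. [: - ((r j)^2), 1 :]) \<and> (\<Sum>j<d. (r j)^2) / real d = \<sigma>^2"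
  shows "\<forall>k. (\<lambda>N. coeff (P_tilde d m p N) k) \<longlonglongrightarrow> coeff (laguerre_limit d m \<sigma>) k"
proof
  fix t
  have "\<forall>i. \<exists>r :: nat \<Rightarrow> real. i \<ge> 1 \<longrightarrow>
           p i = (\<Prod>j<d. [: - ((r j)^2), 1 :]) \<and> (\<Sum>j<d. (r j)^2) / real d = \<sigma>^2"
    using assms(4) by blast
  then obtain R :: "nat \<Rightarrow> nat \<Rightarrow> real" where R: "\<And>i. i \<ge> 1 \<Longrightarrow>
           p i = (\<Prod>j<d. [: - ((R i j)^2), 1 :]) \<and> (\<Sum>j<d. (R i j)^2) / real d = \<sigma>^2"
    by metis
  have d0: "real d > 0" using assms by simp
  have m0: "real m > 0" using assms by simp
  define B where "B = real d * \<sigma>^2"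
  have B0: "B \<ge> 0" unfolding B_def by simp
  have pS: "p (Suc n) = (\<Prod>j<d. [: - ((R (Suc n) j)^2), 1 :])" for n using R[of "Suc n"] by simp
  have sumR: "(\<Sum>j<d. (R (Suc n) j)^2) = B" for n using R[of "Suc n"] d0 unfolding B_def
    by (simp add: field_simps)
  have lp: "coeff (p (Suc n)) d = 1" "\<And>i. i > d \<Longrightarrow> coeff (p (Suc n)) i = 0"
    "coeff (p (Suc n)) (d - 1) = - B" for n
    using lin_prod[where n=d and c="\<lambda>j. (R (Suc n) j)^2"] assms(1) unfolding pS sumR by auto
  have lb: "\<bar>coeff (p (Suc n)) i\<bar> \<le> (1 + B) ^ d" for n i
    unfolding pS
  proof (rule lin_prod_bound[OF _ B0])
    fix j assume "j < d"
    then have "(R (Suc n) j)^2 \<le> (\<Sum>j<d. (R (Suc n) j)^2)"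
      by (intro member_le_sum) auto
    then show "\<bar>(R (Suc n) j)^2\<bar> \<le> B" using sumR by simp
  qed
  define \<alpha> where "\<alpha> = (\<lambda>n k. sgn_coeff d (rect_iter d m p n) k * wt d m k)"
  define \<beta> where "\<beta> = (\<lambda>n k. sgn_coeff d (p (Suc n)) k * wt d m k)"
  define s where "s = \<sigma>^2 / real m"
  have b0: "\<beta> n 0 = 1" for n unfolding \<beta>_def sgn_coeff_def using lp(1) by (simp add: wt0)
  have b1: "\<beta> n 1 = s" for n
    unfolding \<beta>_def sgn_coeff_def s_def using lp(3)[of n] wt1[OF assms(1,2)] d0 m0
    by (simp add: B_def field_simps)
  have bM: "\<bar>\<beta> n k\<bar> \<le> (1 + B) ^ d" for n k
  proof -
    have "\<bar>\<beta> n k\<bar> = \<bar>coeff (p (Suc n)) (d - k)\<bar> * wt d m k"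
      unfolding \<beta>_def sgn_coeff_def using wt_pos[of d m k] by (simp add: abs_mult)
    also have "\<dots> \<le> (1 + B) ^ d * 1"
      by (rule mult_mono[OF lb wt_le1]) (use B0 wt_pos[of d m k] in auto)
    finally show ?thesis by simp
  qed
  have a0: "\<alpha> 0 k = \<beta> 0 k" for k unfolding \<alpha>_def \<beta>_def by simp
  have aS: "\<alpha> (Suc n) k = (\<Sum>i\<le>k. \<alpha> n i * \<beta> (Suc n) (k - i))" if "k \<le> d" for n k
  proof -
    have "\<alpha> (Suc n) k = (\<Sum>i\<le>k. wt d m k * W d m i k * sgn_coeff d (rect_iter d m p n) i *
        sgn_coeff d (p (Suc (Suc n))) (k - i))"
      unfolding \<alpha>_def using sgn_coeff_rect_conv[OF that]
      by (simp add: sum_distrib_right sum_distrib_left mult_ac)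
    also have "\<dots> = (\<Sum>i\<le>k. \<alpha> n i * \<beta> (Suc n) (k - i))"
    proof (rule sum.cong)
      fix i assume "i \<in> {..k}"
      then have "wt d m k * W d m i k = wt d m i * wt d m (k - i)" using that assms(2) by (intro wt_W) auto
      then show "wt d m k * W d m i k * sgn_coeff d (rect_iter d m p n) i * sgn_coeff d (p (Suc (Suc n))) (k - i)
          = \<alpha> n i * \<beta> (Suc n) (k - i)" unfolding \<alpha>_def \<beta>_def by (simp add: mult_ac)
    qed simp
    finally show ?thesis .
  qed
  have lim: "(\<lambda>n. \<alpha> n k / real (Suc n) ^ k) \<longlonglongrightarrow> s ^ k / fact k" if "k \<le> d" for k
    by (rule asym_lim[OF b0 b1 bM a0 aS that]) auto
  have high: "coeff (rect_iter d m p n) j = 0" if "j > d" for n j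
    by (rule coeff_rect_iter_high[OF that]) (use lp(2)[of j 0] that in simp)
  have PN: "P_N d m p (Suc n) = rect_iter d m p n" for n unfolding P_N_def by simp
  have ct: "coeff (P_tilde d m p (Suc n)) t =
      (if even t then coeff (rect_iter d m p n) (t div 2) * real (Suc n) ^ (t div 2) / real (Suc n) ^ d else 0)" for n
    using coeff_P_tilde[of "Suc n" d m p t] unfolding PN by simp
  have "(\<lambda>n. coeff (P_tilde d m p (Suc n)) t) \<longlonglongrightarrow> coeff (laguerre_limit d m \<sigma>) t"
  proof (cases "even t \<and> t div 2 \<le> d")
    case False
    then have "coeff (P_tilde d m p (Suc n)) t = 0" for n unfolding ct using high by auto
    moreover have "coeff (laguerre_limit d m \<sigma>) t = 0"
      unfolding coeff_laguerre_limit[OF assms(1-3)] using False by (simp only: if_False)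
    ultimately show ?thesis by simp
  next
    case True
    define j where "j = t div 2"
    define i where "i = d - j"
    have dji: "d = j + i" using True unfolding i_def j_def by simp
    have eq: "coeff (P_tilde d m p (Suc n)) t = ((-1) ^ i / wt d m i) * (\<alpha> n i / real (Suc n) ^ i)" for n
    proof -
      have c: "coeff (rect_iter d m p n) j = (-1) ^ i * sgn_coeff d (rect_iter d m p n) i"
        unfolding sgn_coeff_def using dji by (simp add: power_mult_distrib[symmetric] mult.assoc[symmetric])
      have "x * real (Suc n) ^ j / real (Suc n) ^ d = x / real (Suc n) ^ i" for x
        unfolding dji by (simp add: power_add field_simps del: of_nat_Suc)
      then show ?thesis unfolding ct using True wt_pos[of d m i]
        by (simp add: j_def[symmetric] c \<alpha>_def del: of_nat_Suc)
    qed
    have "(\<lambda>n. ((-1) ^ i / wt d m i) * (\<alpha> n i / real (Suc n) ^ i)) \<longlonglongrightarrow> ((-1) ^ i / wt d m i) * (s ^ i / fact i)"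
      by (intro tendsto_mult_left lim) (simp add: i_def)
    moreover have "((-1) ^ i / wt d m i) * (s ^ i / fact i) = coeff (laguerre_limit d m \<sigma>) t"
    proof -
      have "coeff (laguerre_limit d m \<sigma>) t = (real (m choose (d - j)) * (-1) ^ j / fact j) * (real m / \<sigma>^2) ^ j /
        ((real (m choose (d - d)) * (-1) ^ d / fact d) * (real m / \<sigma>^2) ^ d)"
        unfolding coeff_laguerre_limit[OF assms(1-3)] j_def using True by (simp only: True if_True simp_thms)
      then show ?thesis unfolding s_def const_eq[OF dji assms(2,3,1)] by simp
    qed
    ultimately show ?thesis unfolding eq by simp
  qed
  then show "(\<lambda>N. coeff (P_tilde d m p N) t) \<longlonglongrightarrow> coeff (laguerre_limit d m \<sigma>) t"
    by (rule LIMSEQ_imp_Suc)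
qed

end
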